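(* Let $\rho$ be a state of $A$ and $\sigma$ a state of $B$. Let $\mathcal{H}_S\subseteq\mathcal{H}_B$ be a subspace such that (1) $\mathcal{H}_B=\mathcal{H}_S\oplus\mathcal{H}_S^\perp$ with $U_B(g)=U_S(g)\oplus U_{S^\perp}(g)$ for all $g$ (i.e. $\mathcal{H}_S$ is invariant and carries the restricted representation $U_S$), and (2) $\Pi_S\sigma\Pi_S=\sigma$, where $\Pi_S$ is the projector onto $\mathcal{H}_S$. Let $S$ be the system with Hilbert space $\mathcal{H}_S$ and representation $U_S$. Then there exists a $G$-covariant channel from $A$ to $B$ mapping $\rho$ to $\sigma$ if and only if there exists a $G$-covariant channel from $A$ to $S$ mapping $\rho$ to $\sigma$.
   Context: $G$ is a compact group; finite-dimensional systems carry continuous unitary representations. A channel (CPTP map) $\mathcal{E}$ from system $X$ to system $Y$ is $G$-covariant if $\mathcal{E}(U_X(g)MU_X(g)^\dagger)=U_Y(g)\mathcal{E}(M)U_Y(g)^\dagger$ for all $g\in G$ and all operators $M$. *)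

theory Defs
  imports "HOL-Analysis.Analysis" "HOL-Algebra.Group" "Jordan_Normal_Form.Matrix"
begin

definition compact_group :: "('g, 'b) monoid_scheme \<Rightarrow> 'g topology \<Rightarrow> bool" where
  "compact_group G T \<longleftrightarrow> group G \<and> topspace T = carrier G \<and> compact_space T \<and> Hausdorff_space T
     \<and> continuous_map (prod_topology T T) T (\<lambda>(g, h). g \<otimes>\<^bsub>G\<^esub> h)
     \<and> continuous_map T T (\<lambda>g. inv\<^bsub>G\<^esub> g)"

text \<open>Operators on the finite-dimensional Hilbert space C^n are n x n complex matrices.\<close>
definition adj :: "complex mat \<Rightarrow> complex mat" where
  "adj A = mat (dim_col A) (dim_row A) (\<lambda>(i, j). cnj (A $$ (j, i)))"

definition mtrace :: "complex mat \<Rightarrow> complex" where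
  "mtrace A = (\<Sum>i<dim_row A. A $$ (i, i))"

definition unitary_mat :: "nat \<Rightarrow> complex mat \<Rightarrow> bool" where
  "unitary_mat n U \<longleftrightarrow> U \<in> carrier_mat n n \<and> adj U * U = 1\<^sub>m n \<and> U * adj U = 1\<^sub>m n"

definition psd :: "nat \<Rightarrow> complex mat \<Rightarrow> bool" where
  "psd n A \<longleftrightarrow> A \<in> carrier_mat n n \<and>
     (\<forall>v \<in> carrier_vec n. Im (conjugate v \<bullet> (A *\<^sub>v v)) = 0 \<and> Re (conjugate v \<bullet> (A *\<^sub>v v)) \<ge> 0)"

definition is_state :: "nat \<Rightarrow> complex mat \<Rightarrow> bool" where
  "is_state n \<rho> \<longleftrightarrow> psd n \<rho> \<and> mtrace \<rho> = 1"

definition cont_unitary_rep :: "('g, 'b) monoid_scheme \<Rightarrow> 'g topology \<Rightarrow> nat \<Rightarrow> ('g \<Rightarrow> complex mat) \<Rightarrow> bool" where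
  "cont_unitary_rep G T n U \<longleftrightarrow>
     (\<forall>g \<in> carrier G. unitary_mat n (U g)) \<and>
     (\<forall>g \<in> carrier G. \<forall>h \<in> carrier G. U (g \<otimes>\<^bsub>G\<^esub> h) = U g * U h) \<and>
     U \<one>\<^bsub>G\<^esub> = 1\<^sub>m n \<and>
     (\<forall>i < n. \<forall>j < n. continuous_map T euclidean (\<lambda>g. U g $$ (i, j)))"

text \<open>The (a, b) block (of size m x m) of a (k m) x (k m) matrix, viewed as an element of
  M_k \<otimes> M_m.\<close>
definition blk :: "nat \<Rightarrow> complex mat \<Rightarrow> nat \<Rightarrow> nat \<Rightarrow> complex mat" where
  "blk m M a b = mat m m (\<lambda>(r, s). M $$ (a * m + r, b * m + s))"

text \<open>The map id_k \<otimes> E from M_k \<otimes> M_m to M_k \<otimes> M_n (blockwise application of E).\<close>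
definition ampl :: "nat \<Rightarrow> nat \<Rightarrow> nat \<Rightarrow> (complex mat \<Rightarrow> complex mat) \<Rightarrow> complex mat \<Rightarrow> complex mat" where
  "ampl k m n E M = mat (k * n) (k * n) (\<lambda>(i, j). E (blk m M (i div n) (j div n)) $$ (i mod n, j mod n))"

definition channel :: "nat \<Rightarrow> nat \<Rightarrow> (complex mat \<Rightarrow> complex mat) \<Rightarrow> bool" where
  "channel m n E \<longleftrightarrow>
     (\<forall>M \<in> carrier_mat m m. E M \<in> carrier_mat n n) \<and>
     (\<forall>M \<in> carrier_mat m m. \<forall>N \<in> carrier_mat m m. E (M + N) = E M + E N) \<and>
     (\<forall>M \<in> carrier_mat m m. \<forall>c. E (c \<cdot>\<^sub>m M) = c \<cdot>\<^sub>m E M) \<and>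
     (\<forall>M \<in> carrier_mat m m. mtrace (E M) = mtrace M) \<and>
     (\<forall>k. \<forall>M. psd (k * m) M \<longrightarrow> psd (k * n) (ampl k m n E M))"

definition covariant :: "('g, 'b) monoid_scheme \<Rightarrow> nat \<Rightarrow> ('g \<Rightarrow> complex mat) \<Rightarrow> nat \<Rightarrow> ('g \<Rightarrow> complex mat)
    \<Rightarrow> (complex mat \<Rightarrow> complex mat) \<Rightarrow> bool" where
  "covariant G m UX n UY E \<longleftrightarrow>
     (\<forall>g \<in> carrier G. \<forall>M \<in> carrier_mat m m.
        E (UX g * M * adj (UX g)) = UY g * E M * adj (UY g))"

definition cov_channel :: "('g, 'b) monoid_scheme \<Rightarrow> nat \<Rightarrow> ('g \<Rightarrow> complex mat) \<Rightarrow> nat \<Rightarrow> ('g \<Rightarrow> complex mat)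
    \<Rightarrow> (complex mat \<Rightarrow> complex mat) \<Rightarrow> bool" where
  "cov_channel G m UX n UY E \<longleftrightarrow> channel m n E \<and> covariant G m UX n UY E"

end

theory Submission
  imports Defs
begin

lemma adj_carrier[simp]: "A \<in> carrier_mat n m \<Longrightarrow> adj A \<in> carrier_mat m n"
  unfolding adj_def by auto
lemma adj_dims[simp]: "dim_row (adj A) = dim_col A" "dim_col (adj A) = dim_row A"
  unfolding adj_def by auto
lemma adj_index[simp]: "i < dim_col A \<Longrightarrow> j < dim_row A \<Longrightarrow> adj A $$ (i,j) = cnj (A $$ (j,i))"
  unfolding adj_def by auto
lemma adj_adj[simp]: "adj (adj A) = A"
  by (rule eq_matI) (auto simp: adj_def)
lemma adj_mult: "A \<in> carrier_mat n m \<Longrightarrow> B \<in> carrier_mat m l \<Longrightarrow> adj (A*B) = adj B * adj A"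
  by (rule eq_matI) (auto simp: adj_def scalar_prod_def intro!: sum.cong)
lemma adj_one[simp]: "adj (1\<^sub>m n) = 1\<^sub>m n"
  by (rule eq_matI) (auto simp: adj_def)
lemma adj_add: "A \<in> carrier_mat n m \<Longrightarrow> B \<in> carrier_mat n m \<Longrightarrow> adj (A + B) = adj A + adj B"
  by (rule eq_matI) (auto simp: adj_def)
lemma adj_minus: "A \<in> carrier_mat n m \<Longrightarrow> B \<in> carrier_mat n m \<Longrightarrow> adj (A - B) = adj A - adj B"
  by (rule eq_matI) (auto simp: adj_def)

lemma mtrace_add: "A \<in> carrier_mat n n \<Longrightarrow> B \<in> carrier_mat n n \<Longrightarrow> mtrace (A+B) = mtrace A + mtrace B"
  by (auto simp: mtrace_def sum.distrib)
lemma mtrace_minus: "A \<in> carrier_mat n n \<Longrightarrow> B \<in> carrier_mat n n \<Longrightarrow> mtrace (A-B) = mtrace A - mtrace B"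
  by (auto simp: mtrace_def sum_subtractf)
lemma mtrace_smult: "A \<in> carrier_mat n n \<Longrightarrow> mtrace (c \<cdot>\<^sub>m A) = c * mtrace A"
  by (auto simp: mtrace_def sum_distrib_left intro!: sum.cong)
lemma mtrace_one: "mtrace (1\<^sub>m n) = of_nat n"
  by (auto simp: mtrace_def)
lemma mtrace_comm: assumes "A \<in> carrier_mat n m" "B \<in> carrier_mat m n"
  shows "mtrace (A*B) = mtrace (B*A)"
proof -
  have "mtrace (A*B) = (\<Sum>i<n. \<Sum>k<m. A$$(i,k)*B$$(k,i))"
    using assms by (auto simp: mtrace_def scalar_prod_def atLeast0LessThan intro!: sum.cong)
  also have "\<dots> = (\<Sum>k<m. \<Sum>i<n. B$$(k,i)*A$$(i,k))"
    by (subst sum.swap) (simp add: mult.commute)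
  also have "\<dots> = mtrace (B*A)"
    using assms by (auto simp: mtrace_def scalar_prod_def atLeast0LessThan intro!: sum.cong)
  finally show ?thesis .
qed

lemma mult3_index:
  assumes "A \<in> carrier_mat n1 n2" "B \<in> carrier_mat n2 n3" "C \<in> carrier_mat n3 n4" "i < n1" "j < n4"
  shows "(A*B*C)$$(i,j) = (\<Sum>p<n2. \<Sum>q<n3. A$$(i,p) * B$$(p,q) * C$$(q,j))"
proof -
  have "(A*B*C)$$(i,j) = (\<Sum>q<n3. (\<Sum>p<n2. A$$(i,p) * B$$(p,q)) * C$$(q,j))"
    using assms by (auto simp del: assoc_mult_mat simp: scalar_prod_def atLeast0LessThan intro!: sum.cong)
  also have "\<dots> = (\<Sum>q<n3. \<Sum>p<n2. A$$(i,p) * B$$(p,q) * C$$(q,j))"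
    by (simp add: sum_distrib_right)
  also have "\<dots> = (\<Sum>p<n2. \<Sum>q<n3. A$$(i,p) * B$$(p,q) * C$$(q,j))"
    by (rule sum.swap)
  finally show ?thesis .
qed

lemma qf_adj:
  assumes A: "A \<in> carrier_mat n m" and w: "w \<in> carrier_vec n" and v: "v \<in> carrier_vec m"
  shows "conjugate v \<bullet> (adj A *\<^sub>v w) = conjugate (A *\<^sub>v v) \<bullet> w"
proof -
  have "conjugate v \<bullet> (adj A *\<^sub>v w) = (\<Sum>j<m. cnj (v$j) * (\<Sum>i<n. cnj (A$$(i,j)) * w$i))"
    using assms by (auto simp: scalar_prod_def atLeast0LessThan intro!: sum.cong)
  also have "\<dots> = (\<Sum>j<m. \<Sum>i<n. cnj (A$$(i,j) * v$j) * w$i)"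
    by (simp add: sum_distrib_left mult.commute mult.left_commute)
  also have "\<dots> = (\<Sum>i<n. \<Sum>j<m. cnj (A$$(i,j) * v$j) * w$i)"
    by (rule sum.swap)
  also have "\<dots> = (\<Sum>i<n. cnj (\<Sum>j<m. A$$(i,j) * v$j) * w$i)"
    by (simp add: sum_distrib_right)
  also have "\<dots> = conjugate (A *\<^sub>v v) \<bullet> w"
    using assms by (auto simp: scalar_prod_def atLeast0LessThan intro!: sum.cong)
  finally show ?thesis .
qed

lemma psd_congr:
  assumes Y: "psd n Y" and A: "A \<in> carrier_mat n m"
  shows "psd m (adj A * Y * A)"
  unfolding psd_def
proof (intro conjI ballI)
  have Yc: "Y \<in> carrier_mat n n" using Y by (simp add: psd_def)
  show "adj A * Y * A \<in> carrier_mat m m" using Yc A by auto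
  fix v :: "complex vec" assume v: "v \<in> carrier_vec m"
  have Av: "A *\<^sub>v v \<in> carrier_vec n" using A v by auto
  have "(adj A * Y * A) *\<^sub>v v = (adj A * Y) *\<^sub>v (A *\<^sub>v v)"
    by (rule assoc_mult_mat_vec[of _ m n _ m]) (use A Yc v in auto)
  also have "\<dots> = adj A *\<^sub>v (Y *\<^sub>v (A *\<^sub>v v))"
    by (rule assoc_mult_mat_vec[of _ m n _ n]) (use A Yc Av in auto)
  finally have "(adj A * Y * A) *\<^sub>v v = adj A *\<^sub>v (Y *\<^sub>v (A *\<^sub>v v))" .
  hence eq: "conjugate v \<bullet> ((adj A * Y * A) *\<^sub>v v) = conjugate (A *\<^sub>v v) \<bullet> (Y *\<^sub>v (A *\<^sub>v v))"
    using qf_adj[OF A _ v, of "Y *\<^sub>v (A *\<^sub>v v)"] Yc Av by auto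
  show "Im (conjugate v \<bullet> ((adj A * Y * A) *\<^sub>v v)) = 0"
    "0 \<le> Re (conjugate v \<bullet> ((adj A * Y * A) *\<^sub>v v))"
    using Y Av unfolding eq psd_def by auto
qed

lemma sum_block: "(\<Sum>x<k*n. f x) = (\<Sum>a<k. \<Sum>p<n. f (a*n+p))" for k n :: nat
proof (induction k)
  case 0 then show ?case by simp
next
  case (Suc k)
  have "(\<Sum>x<Suc k*n. f x) = (\<Sum>x<k*n. f x) + (\<Sum>x\<in>{k*n..<k*n+n}. f x)"
    by (simp add: add.commute sum.atLeastLessThan_concat[symmetric] atLeast0LessThan[symmetric])
  also have "(\<Sum>x\<in>{k*n..<k*n+n}. f x) = (\<Sum>p<n. f (k*n+p))"
    by (simp add: sum.shift_bounds_nat_ivl[symmetric] atLeast0LessThan[symmetric] add.commute)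
  finally show ?case using Suc by simp
qed


lemma sum_single: "finite S \<Longrightarrow> a \<in> S \<Longrightarrow> (\<And>x. x \<in> S \<Longrightarrow> x \<noteq> a \<Longrightarrow> h x = 0) \<Longrightarrow> sum h S = h a"
  by (metis (no_types, lifting) sum.remove sum.neutral add_0_right DiffE singletonI)

lemma block_restrict:
  fixes F :: "nat \<Rightarrow> nat \<Rightarrow> complex" and k n a b :: nat
  assumes ab: "a < k" "b < k"
    and van: "\<And>u w. u < k*n \<Longrightarrow> w < k*n \<Longrightarrow> u div n \<noteq> a \<or> w div n \<noteq> b \<Longrightarrow> F u w = 0"
  shows "(\<Sum>u<k*n. \<Sum>w<k*n. F u w) = (\<Sum>p<n. \<Sum>q<n. F (a*n+p) (b*n+q))"
proof -
  have lt: "a'*n+p < k*n" if "a' < k" "p < n" for a' p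
  proof -
    have "a'*n+p < a'*n + n" using that by simp
    also have "\<dots> = Suc a' * n" by simp
    also have "\<dots> \<le> k*n" using that by (intro mult_right_mono) auto
    finally show ?thesis .
  qed
  have dv: "(a'*n+p) div n = a'" if "p < n" for a' p
    using that by simp
  have "(\<Sum>u<k*n. \<Sum>w<k*n. F u w) = (\<Sum>a'<k. \<Sum>p<n. \<Sum>b'<k. \<Sum>q<n. F (a'*n+p) (b'*n+q))"
    by (simp add: sum_block)
  also have "\<dots> = (\<Sum>p<n. \<Sum>b'<k. \<Sum>q<n. F (a*n+p) (b'*n+q))"
  proof (rule sum_single)
    fix a' assume a': "a' \<in> {..<k}" "a' \<noteq> a"
    show "(\<Sum>p<n. \<Sum>b'<k. \<Sum>q<n. F (a'*n+p) (b'*n+q)) = 0"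
      using a' by (intro sum.neutral ballI) (auto intro!: van lt simp: dv)
  qed (use ab in auto)
  also have "\<dots> = (\<Sum>p<n. \<Sum>q<n. F (a*n+p) (b*n+q))"
  proof (rule sum.cong[OF refl], rule sum_single)
    fix p b' assume p: "p \<in> {..<n}" and b': "b' \<in> {..<k}" "b' \<noteq> b"
    show "(\<Sum>q<n. F (a*n+p) (b'*n+q)) = 0"
      using p b' ab by (intro sum.neutral ballI) (auto intro!: van lt simp: dv)
  qed (use ab in auto)
  finally show ?thesis .
qed

lemma qf_expand:
  assumes "X \<in> carrier_mat N N" "v \<in> carrier_vec N"
  shows "conjugate v \<bullet> (X *\<^sub>v v) = (\<Sum>x<N. \<Sum>y<N. cnj (v$x) * X$$(x,y) * v$y)"
  using assms by (auto simp: scalar_prod_def atLeast0LessThan sum_distrib_left mult.assoc intro!: sum.cong)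

lemma kraus_psd:
  fixes Y X :: "complex mat" and K :: "'i \<Rightarrow> complex mat" and k n m :: nat
  assumes Y: "psd (k*n) Y" and I: "finite I" and K: "\<And>i. i\<in>I \<Longrightarrow> K i \<in> carrier_mat n m"
    and X: "X \<in> carrier_mat (k*m) (k*m)"
    and ent: "\<And>a b r s. a<k \<Longrightarrow> b<k \<Longrightarrow> r<m \<Longrightarrow> s<m \<Longrightarrow> X $$ (a*m+r, b*m+s) =
        (\<Sum>i\<in>I. \<Sum>p<n. \<Sum>q<n. cnj (K i $$ (p,r)) * Y $$ (a*n+p, b*n+q) * K i $$ (q,s))"
  shows "psd (k*m) X"
proof -
  define Kt where "Kt i = mat (k*n) (k*m) (\<lambda>(x,y). if x div n = y div m then K i $$ (x mod n, y mod m) else 0)" for i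
  have Ktc: "Kt i \<in> carrier_mat (k*n) (k*m)" for i by (simp add: Kt_def)
  have Yc: "Y \<in> carrier_mat (k*n) (k*n)" using Y psd_def by auto
  define Xi where "Xi i = adj (Kt i) * Y * Kt i" for i
  have psdi: "psd (k*m) (Xi i)" for i unfolding Xi_def using psd_congr[OF Y Ktc] .
  have Xic: "Xi i \<in> carrier_mat (k*m) (k*m)" for i using psdi[of i] by (simp add: psd_def)
  have entI: "X $$ (x,y) = (\<Sum>i\<in>I. Xi i $$ (x,y))" if x: "x < k*m" and y: "y < k*m" for x y
  proof -
    define a r b s where "a = x div m" and "r = x mod m" and "b = y div m" and "s = y mod m"
    have m0: "0 < m" using x by (cases m) auto
    have a: "a < k" "r < m" "b < k" "s < m" using x y m0
      by (auto simp: a_def r_def b_def s_def less_mult_imp_div_less)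
    have xe: "x = a*m+r" "y = b*m+s" by (simp_all add: a_def r_def b_def s_def)
    have "Xi i $$ (x,y) = (\<Sum>p<n. \<Sum>q<n. cnj (K i $$ (p,r)) * Y $$ (a*n+p, b*n+q) * K i $$ (q,s))" for i
    proof -
      have "Xi i $$ (x,y) = (\<Sum>u<k*n. \<Sum>w<k*n. adj (Kt i) $$ (x,u) * Y $$ (u,w) * Kt i $$ (w,y))"
        unfolding Xi_def by (rule mult3_index[of _ "k*m" "k*n" _ "k*n" _ "k*m"]) (use Ktc Yc x y in auto)
      also have "\<dots> = (\<Sum>p<n. \<Sum>q<n. adj (Kt i) $$ (x,a*n+p) * Y $$ (a*n+p, b*n+q) * Kt i $$ (b*n+q,y))"
      proof (rule block_restrict[OF a(1) a(3)])
        fix u w assume u: "u < k*n" and w: "w < k*n" and d: "u div n \<noteq> a \<or> w div n \<noteq> b"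
        show "adj (Kt i) $$ (x,u) * Y $$ (u,w) * Kt i $$ (w,y) = 0"
          using d u w x y Ktc by (auto simp: Kt_def a_def b_def)
      qed
      also have "\<dots> = (\<Sum>p<n. \<Sum>q<n. cnj (K i $$ (p,r)) * Y $$ (a*n+p, b*n+q) * K i $$ (q,s))"
      proof (intro sum.cong refl)
        fix p q assume p: "p \<in> {..<n}" and q: "q \<in> {..<n}"
        have lt: "a'*n+p' < k*n" if "a' < k" "p' < n" for a' p'
        proof -
          have "a'*n+p' < a'*n + n" using that by simp
          also have "\<dots> = Suc a' * n" by simp
          also have "\<dots> \<le> k*n" using that by (intro mult_right_mono) auto
          finally show ?thesis .
        qed
        have "adj (Kt i) $$ (x,a*n+p) = cnj (K i $$ (p,r))"
          using lt[OF a(1), of p] p x Ktc by (auto simp: Kt_def a_def r_def)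
        moreover have "Kt i $$ (b*n+q,y) = K i $$ (q,s)"
          using lt[OF a(3), of q] q y by (auto simp: Kt_def b_def s_def)
        ultimately show "adj (Kt i) $$ (x,a*n+p) * Y $$ (a*n+p, b*n+q) * Kt i $$ (b*n+q,y) =
            cnj (K i $$ (p,r)) * Y $$ (a*n+p, b*n+q) * K i $$ (q,s)" by simp
      qed
      finally show ?thesis .
    qed
    then show ?thesis using ent[OF a(1) a(3) a(2) a(4)] xe by simp
  qed
  show ?thesis unfolding psd_def
  proof (intro conjI ballI)
    show "X \<in> carrier_mat (k*m) (k*m)" by (rule X)
    fix v :: "complex vec" assume v: "v \<in> carrier_vec (k*m)"
    have "conjugate v \<bullet> (X *\<^sub>v v) = (\<Sum>x<k*m. \<Sum>y<k*m. cnj (v$x) * X$$(x,y) * v$y)"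
      by (rule qf_expand[OF X v])
    also have "\<dots> = (\<Sum>x<k*m. \<Sum>y<k*m. \<Sum>i\<in>I. cnj (v$x) * Xi i $$(x,y) * v$y)"
      by (auto simp: entI sum_distrib_left sum_distrib_right intro!: sum.cong)
    also have "\<dots> = (\<Sum>x<k*m. \<Sum>i\<in>I. \<Sum>y<k*m. cnj (v$x) * Xi i $$(x,y) * v$y)"
      by (intro sum.cong refl sum.swap)
    also have "\<dots> = (\<Sum>i\<in>I. \<Sum>x<k*m. \<Sum>y<k*m. cnj (v$x) * Xi i $$(x,y) * v$y)"
      by (rule sum.swap)
    also have "\<dots> = (\<Sum>i\<in>I. conjugate v \<bullet> (Xi i *\<^sub>v v))"
      by (intro sum.cong refl qf_expand[symmetric] Xic v)
    finally have eq: "conjugate v \<bullet> (X *\<^sub>v v) = (\<Sum>i\<in>I. conjugate v \<bullet> (Xi i *\<^sub>v v))" .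
    have "Im (conjugate v \<bullet> (Xi i *\<^sub>v v)) = 0" "0 \<le> Re (conjugate v \<bullet> (Xi i *\<^sub>v v))" for i
      using psdi[of i] v unfolding psd_def by auto
    then show "Im (conjugate v \<bullet> (X *\<^sub>v v)) = 0" "0 \<le> Re (conjugate v \<bullet> (X *\<^sub>v v))"
      unfolding eq by (auto simp: Im_sum Re_sum intro: sum_nonneg)
  qed
qed


lemma lt_block: "a < k \<Longrightarrow> p < n \<Longrightarrow> a*n+p < k*(n::nat)"
proof -
  assume that: "a < k" "p < n"
  have "a*n+p < a*n + n" using that by simp
  also have "\<dots> = Suc a * n" by simp
  also have "\<dots> \<le> k*n" using that by (intro mult_right_mono) auto
  finally show ?thesis .
qed

lemma ampl_carrier[simp]: "ampl k m n E M \<in> carrier_mat (k*n) (k*n)"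
  by (simp add: ampl_def)

lemma ampl_index:
  "a < k \<Longrightarrow> b < k \<Longrightarrow> r < n \<Longrightarrow> s < n \<Longrightarrow> ampl k m n E M $$ (a*n+r, b*n+s) = E (blk m M a b) $$ (r,s)"
  using lt_block[of a k r n] lt_block[of b k s n] by (simp add: ampl_def)

lemma blk_carrier[simp]: "blk m M a b \<in> carrier_mat m m"
  by (simp add: blk_def)

definition kr :: "complex mat \<Rightarrow> complex mat \<Rightarrow> nat \<Rightarrow> nat \<Rightarrow> (nat \<times> nat) option \<Rightarrow> complex mat" where
  "kr V P dB dS i = (case i of None \<Rightarrow> V | Some (l,t) \<Rightarrow>
     mat dB dS (\<lambda>(p,r). if r = t then P $$ (p,l) * complex_of_real (1 / sqrt (real dS)) else 0))"

lemma kr_carrier: "V \<in> carrier_mat dB dS \<Longrightarrow> kr V P dB dS i \<in> carrier_mat dB dS"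
  by (cases i) (auto simp: kr_def)

lemma fwd_entry:
  fixes EB P V :: "complex mat"
  assumes EB: "EB \<in> carrier_mat dB dB" and V: "V \<in> carrier_mat dB dS" and P: "P \<in> carrier_mat dB dB"
    and Ph: "adj P = P" and PP: "P * P = P" and dS: "0 < dS" and r: "r < dS" and s: "s < dS"
  shows "(adj V * EB * V + (mtrace (P * EB) / of_nat dS) \<cdot>\<^sub>m 1\<^sub>m dS) $$ (r,s) =
    (\<Sum>i\<in>insert None (Some ` ({..<dB} \<times> {..<dS})).
       \<Sum>p<dB. \<Sum>q<dB. cnj (kr V P dB dS i $$ (p,r)) * EB $$ (p,q) * kr V P dB dS i $$ (q,s))"
proof -
  define c0 where "c0 = complex_of_real (1 / sqrt (real dS))"
  have c0: "cnj c0 * c0 = 1 / of_nat dS"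
  proof -
    have "cnj c0 * c0 = complex_of_real ((1 / sqrt (real dS)) * (1 / sqrt (real dS)))"
      unfolding c0_def by (simp only: complex_cnj_complex_of_real of_real_mult)
    also have "(1 / sqrt (real dS)) * (1 / sqrt (real dS)) = 1 / real dS"
      using dS by (simp add: real_sqrt_mult[symmetric])
    finally show ?thesis by simp
  qed
  define f where "f i = (\<Sum>p<dB. \<Sum>q<dB. cnj (kr V P dB dS i $$ (p,r)) * EB $$ (p,q) * kr V P dB dS i $$ (q,s))" for i
  have Pl: "cnj (P $$ (p,l)) = P $$ (l,p)" if "p < dB" "l < dB" for p l
  proof -
    have "adj P $$ (l,p) = cnj (P $$ (p,l))" using P that by simp
    then show ?thesis using Ph by simp
  qed
  have sumI: "(\<Sum>i\<in>insert None (Some ` ({..<dB} \<times> {..<dS})). f i) =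
      f None + (\<Sum>l<dB. \<Sum>t<dS. f (Some (l,t)))"
    by (simp add: sum.reindex sum.cartesian_product)
  have fN: "f None = (adj V * EB * V) $$ (r,s)"
    unfolding f_def kr_def using mult3_index[of "adj V" dS dB EB dB V dS r s] V EB r s by simp
  have ft: "(\<Sum>t<dS. f (Some (l,t))) = (if r = s then (\<Sum>p<dB. \<Sum>q<dB. P $$ (l,p) * EB $$ (p,q) * P $$ (q,l)) / of_nat dS else 0)"
    if l: "l < dB" for l
  proof -
    have "(\<Sum>t<dS. f (Some (l,t))) = f (Some (l,r))"
    proof (rule sum_single)
      fix t assume "t \<in> {..<dS}" "t \<noteq> r"
      then show "f (Some (l,t)) = 0" unfolding f_def kr_def using r by (auto intro!: sum.neutral)
    qed (use r in auto)
    also have "\<dots> = (\<Sum>p<dB. \<Sum>q<dB. (if r = s then P $$ (l,p) * EB $$ (p,q) * P $$ (q,l) / of_nat dS else 0))"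
    proof -
      have e: "cnj (kr V P dB dS (Some (l,r)) $$ (p,r)) * EB $$ (p,q) * kr V P dB dS (Some (l,r)) $$ (q,s)
          = (if r = s then P $$ (l,p) * EB $$ (p,q) * P $$ (q,l) / of_nat dS else 0)"
        if p: "p < dB" and q: "q < dB" for p q
      proof -
        have k1: "kr V P dB dS (Some (l,r)) $$ (p,r) = P $$ (p,l) * c0"
          using p r by (simp add: kr_def c0_def)
        have k2: "kr V P dB dS (Some (l,r)) $$ (q,s) = (if s = r then P $$ (q,l) * c0 else 0)"
          using q s by (simp add: kr_def c0_def)
        have "cnj (P $$ (p,l) * c0) * EB $$ (p,q) * (P $$ (q,l) * c0) = P $$ (l,p) * EB $$ (p,q) * P $$ (q,l) * (cnj c0 * c0)"
          using Pl[of p l] p l by (simp add: mult_ac)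
        then show ?thesis unfolding k1 k2 using c0 by auto
      qed
      show ?thesis unfolding f_def by (intro sum.cong refl) (auto simp: e)
    qed
    also have "\<dots> = (if r = s then (\<Sum>p<dB. \<Sum>q<dB. P $$ (l,p) * EB $$ (p,q) * P $$ (q,l)) / of_nat dS else 0)"
      by (simp add: sum_divide_distrib)
    finally show ?thesis .
  qed
  have tr: "(\<Sum>l<dB. \<Sum>p<dB. \<Sum>q<dB. P $$ (l,p) * EB $$ (p,q) * P $$ (q,l)) = mtrace (P * EB)"
  proof -
    have "mtrace (P * EB * P) = (\<Sum>l<dB. (P * EB * P) $$ (l,l))"
      unfolding mtrace_def using P by (simp del: assoc_mult_mat)
    also have "\<dots> = (\<Sum>l<dB. \<Sum>p<dB. \<Sum>q<dB. P $$ (l,p) * EB $$ (p,q) * P $$ (q,l))"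
      by (rule sum.cong[OF refl], rule mult3_index[OF P EB P]) auto
    finally have "(\<Sum>l<dB. \<Sum>p<dB. \<Sum>q<dB. P $$ (l,p) * EB $$ (p,q) * P $$ (q,l)) = mtrace (P * EB * P)" by simp
    also have "\<dots> = mtrace (P * (P * EB))"
      by (rule mtrace_comm[of _ dB dB]) (use P EB in auto)
    also have "P * (P * EB) = P * EB"
      using P EB PP by (metis assoc_mult_mat)
    finally show ?thesis .
  qed
  have "(\<Sum>i\<in>insert None (Some ` ({..<dB} \<times> {..<dS})). f i) =
     (adj V * EB * V) $$ (r,s) + (if r = s then mtrace (P * EB) / of_nat dS else 0)"
    unfolding sumI fN using ft tr by (simp add: sum_divide_distrib[symmetric])
  also have "\<dots> = (adj V * EB * V + (mtrace (P * EB) / of_nat dS) \<cdot>\<^sub>m 1\<^sub>m dS) $$ (r,s)"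
    using V EB r s by simp
  finally show ?thesis unfolding f_def by simp
qed


lemma sand_add:
  fixes A X Y B :: "complex mat"
  assumes "A \<in> carrier_mat n m" "X \<in> carrier_mat m m" "Y \<in> carrier_mat m m" "B \<in> carrier_mat m l"
  shows "A * (X + Y) * B = A * X * B + A * Y * B"
proof -
  have "A * (X + Y) = A * X + A * Y" by (rule mult_add_distrib_mat) (use assms in auto)
  moreover have "(A * X + A * Y) * B = A * X * B + A * Y * B"
    by (rule add_mult_distrib_mat) (use assms in auto)
  ultimately show ?thesis by simp
qed

lemma sand_smult:
  fixes A X B :: "complex mat"
  assumes "A \<in> carrier_mat n m" "X \<in> carrier_mat m m" "B \<in> carrier_mat m l"
  shows "A * (c \<cdot>\<^sub>m X) * B = c \<cdot>\<^sub>m (A * X * B)"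
proof -
  have "A * (c \<cdot>\<^sub>m X) = c \<cdot>\<^sub>m (A * X)" by (rule mult_smult_distrib) (use assms in auto)
  moreover have "(c \<cdot>\<^sub>m (A * X)) * B = c \<cdot>\<^sub>m (A * X * B)"
    by (rule mult_smult_assoc_mat) (use assms in auto)
  ultimately show ?thesis by simp
qed

lemma back_channel:
  assumes E: "channel dA dS E" and V: "V \<in> carrier_mat dB dS" and VV: "adj V * V = 1\<^sub>m dS"
  shows "channel dA dB (\<lambda>M. V * E M * adj V)"
  unfolding channel_def
proof (intro conjI ballI allI impI)
  have Ec: "E M \<in> carrier_mat dS dS" if "M \<in> carrier_mat dA dA" for M
    using E that unfolding channel_def by auto
  have aV: "adj V \<in> carrier_mat dS dB" using V by simp
  fix M :: "complex mat" assume M: "M \<in> carrier_mat dA dA"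
  show "V * E M * adj V \<in> carrier_mat dB dB" using Ec[OF M] V aV by (metis mult_carrier_mat)
  {
    fix N :: "complex mat" assume N: "N \<in> carrier_mat dA dA"
    have "E (M + N) = E M + E N" using E M N unfolding channel_def by auto
    then show "V * E (M + N) * adj V = V * E M * adj V + V * E N * adj V"
      using sand_add[OF V Ec[OF M] Ec[OF N] aV] by simp
  }
  {
    fix c
    have "E (c \<cdot>\<^sub>m M) = c \<cdot>\<^sub>m E M" using E M unfolding channel_def by auto
    then show "V * E (c \<cdot>\<^sub>m M) * adj V = c \<cdot>\<^sub>m (V * E M * adj V)"
      using sand_smult[OF V Ec[OF M] aV] by simp
  }
  {
    have "mtrace (V * E M * adj V) = mtrace (adj V * (V * E M))"
      by (rule mtrace_comm[of _ dB dS]) (use V Ec[OF M] aV in auto)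
    also have "adj V * (V * E M) = adj V * V * E M"
      by (rule assoc_mult_mat[symmetric]) (use V Ec[OF M] aV in auto)
    also have "\<dots> = E M" using VV Ec[OF M] by simp
    also have "mtrace (E M) = mtrace M" using E M unfolding channel_def by auto
    finally show "mtrace (V * E M * adj V) = mtrace M" .
  }
next
  have Ec: "E M \<in> carrier_mat dS dS" if "M \<in> carrier_mat dA dA" for M
    using E that unfolding channel_def by auto
  have aV: "adj V \<in> carrier_mat dS dB" using V by simp
  fix k and M :: "complex mat" assume M: "psd (k * dA) M"
  have Y: "psd (k*dS) (ampl k dA dS E M)" using E M unfolding channel_def by auto
  show "psd (k * dB) (ampl k dA dB (\<lambda>M. V * E M * adj V) M)"
  proof (rule kraus_psd[OF Y, of "{()}" "\<lambda>_. adj V"])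
    fix a b r s assume ab: "a < k" "b < k" and rs: "r < dB" "s < dB"
    have EB: "E (blk dA M a b) \<in> carrier_mat dS dS" by (rule Ec) simp
    have "ampl k dA dB (\<lambda>M. V * E M * adj V) M $$ (a * dB + r, b * dB + s) =
        (V * E (blk dA M a b) * adj V) $$ (r,s)" using ab rs by (simp add: ampl_index)
    also have "\<dots> = (\<Sum>p<dS. \<Sum>q<dS. V $$ (r,p) * E (blk dA M a b) $$ (p,q) * adj V $$ (q,s))"
      by (rule mult3_index[OF V EB aV rs])
    also have "\<dots> = (\<Sum>p<dS. \<Sum>q<dS. cnj (adj V $$ (p, r)) * ampl k dA dS E M $$ (a * dS + p, b * dS + q) * adj V $$ (q, s))"
      using V rs ab by (auto intro!: sum.cong simp: ampl_index)
    finally show "ampl k dA dB (\<lambda>M. V * E M * adj V) M $$ (a * dB + r, b * dB + s) =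
        (\<Sum>i\<in>{()}. \<Sum>p<dS. \<Sum>q<dS. cnj (adj V $$ (p, r)) * ampl k dA dS E M $$ (a * dS + p, b * dS + q) * adj V $$ (q, s))"
      by simp
  qed (use aV in auto)
qed


lemma proj_facts:
  fixes V :: "complex mat"
  assumes V: "V \<in> carrier_mat dB dS" and VV: "adj V * V = 1\<^sub>m dS"
  shows "V * adj V * (V * adj V) = V * adj V"
    "adj (1\<^sub>m dB - V * adj V) = 1\<^sub>m dB - V * adj V"
    "(1\<^sub>m dB - V * adj V) * (1\<^sub>m dB - V * adj V) = 1\<^sub>m dB - V * adj V"
proof -
  have aV: "adj V \<in> carrier_mat dS dB" using V by simp
  have Pi: "V * adj V \<in> carrier_mat dB dB" using mult_carrier_mat[OF V aV] .
  have "V * adj V * (V * adj V) = V * (adj V * (V * adj V))"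
    by (rule assoc_mult_mat) (use V aV Pi in auto)
  also have "adj V * (V * adj V) = adj V * V * adj V"
    by (rule assoc_mult_mat[symmetric]) (use V aV in auto)
  also have "\<dots> = adj V" using VV left_mult_one_mat[OF aV] by simp
  finally show PP: "V * adj V * (V * adj V) = V * adj V" .
  have "adj (V * adj V) = V * adj V" using adj_mult[OF V aV] by simp
  then show "adj (1\<^sub>m dB - V * adj V) = 1\<^sub>m dB - V * adj V"
    using adj_minus[of "1\<^sub>m dB" dB dB "V * adj V"] Pi by simp
  have "(1\<^sub>m dB - V * adj V) * (1\<^sub>m dB - V * adj V) =
      1\<^sub>m dB * (1\<^sub>m dB - V * adj V) - V * adj V * (1\<^sub>m dB - V * adj V)"
    by (rule minus_mult_distrib_mat[where nc=dB]) (use Pi in \<open>auto simp: minus_carrier_mat\<close>)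
  also have "V * adj V * (1\<^sub>m dB - V * adj V) = V * adj V * 1\<^sub>m dB - V * adj V * (V * adj V)"
    by (rule mult_minus_distrib_mat) (use Pi in auto)
  also have "\<dots> = 0\<^sub>m dB dB" unfolding PP using Pi right_mult_one_mat[OF Pi] by (auto intro!: eq_matI)
  finally show "(1\<^sub>m dB - V * adj V) * (1\<^sub>m dB - V * adj V) = 1\<^sub>m dB - V * adj V"
    using Pi by (intro eq_matI) auto
qed

lemma fwd_channel:
  fixes V :: "complex mat"
  assumes E: "channel dA dB E" and V: "V \<in> carrier_mat dB dS" and VV: "adj V * V = 1\<^sub>m dS"
    and dS: "0 < dS"
  shows "channel dA dS (\<lambda>M. adj V * E M * V + (mtrace ((1\<^sub>m dB - V * adj V) * E M) / of_nat dS) \<cdot>\<^sub>m 1\<^sub>m dS)"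
  unfolding channel_def
proof (intro conjI ballI allI impI)
  define P where "P = 1\<^sub>m dB - V * adj V"
  have aV: "adj V \<in> carrier_mat dS dB" using V by simp
  have Pi: "V * adj V \<in> carrier_mat dB dB" using mult_carrier_mat[OF V aV] .
  have Pc: "P \<in> carrier_mat dB dB" unfolding P_def using Pi by (simp add: minus_carrier_mat)
  have Ec: "E M \<in> carrier_mat dB dB" if "M \<in> carrier_mat dA dA" for M
    using E that unfolding channel_def by auto
  have sc: "adj V * X * V \<in> carrier_mat dS dS" if "X \<in> carrier_mat dB dB" for X
    using that V aV by (metis mult_carrier_mat)
  have trP: "mtrace (P * X) = mtrace X - mtrace (V * adj V * X)" if X: "X \<in> carrier_mat dB dB" for X
  proof -
    have "P * X = 1\<^sub>m dB * X - V * adj V * X" unfolding P_def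
      by (rule minus_mult_distrib_mat) (use Pi X in auto)
    then show ?thesis using X Pi by (simp del: assoc_mult_mat add: mtrace_minus[of _ dB])
  qed
  have trS: "mtrace (adj V * X * V) = mtrace (V * adj V * X)" if X: "X \<in> carrier_mat dB dB" for X
  proof -
    have "mtrace (adj V * X * V) = mtrace (V * (adj V * X))"
      by (rule mtrace_comm[of _ dS dB]) (use X V aV in auto)
    also have "V * (adj V * X) = V * adj V * X"
      by (rule assoc_mult_mat[symmetric]) (use X V aV in auto)
    finally show ?thesis .
  qed
  fix M :: "complex mat" assume M: "M \<in> carrier_mat dA dA"
  show "adj V * E M * V + (mtrace (P * E M) / of_nat dS) \<cdot>\<^sub>m 1\<^sub>m dS \<in> carrier_mat dS dS"
    using sc[OF Ec[OF M]] by simp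
  {
    fix N :: "complex mat" assume N: "N \<in> carrier_mat dA dA"
    have EMN: "E (M + N) = E M + E N" using E M N unfolding channel_def by auto
    have t: "mtrace (P * (E M + E N)) = mtrace (P * E M) + mtrace (P * E N)"
      using mult_add_distrib_mat[OF Pc Ec[OF M] Ec[OF N]] Pc Ec[OF M] Ec[OF N]
      by (simp add: mtrace_add[of _ dB])
    show "adj V * E (M + N) * V + (mtrace (P * E (M + N)) / of_nat dS) \<cdot>\<^sub>m 1\<^sub>m dS =
       adj V * E M * V + (mtrace (P * E M) / of_nat dS) \<cdot>\<^sub>m 1\<^sub>m dS +
       (adj V * E N * V + (mtrace (P * E N) / of_nat dS) \<cdot>\<^sub>m 1\<^sub>m dS)"
      unfolding EMN t sand_add[OF aV Ec[OF M] Ec[OF N] V]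
      using sc[OF Ec[OF M]] sc[OF Ec[OF N]]
      by (intro eq_matI) (auto simp: add_divide_distrib algebra_simps)
  }
  {
    fix c :: complex
    have EcM: "E (c \<cdot>\<^sub>m M) = c \<cdot>\<^sub>m E M" using E M unfolding channel_def by auto
    have t: "mtrace (P * (c \<cdot>\<^sub>m E M)) = c * mtrace (P * E M)"
      using mult_smult_distrib[OF Pc Ec[OF M]] Pc Ec[OF M] by (simp add: mtrace_smult[of _ dB])
    show "adj V * E (c \<cdot>\<^sub>m M) * V + (mtrace (P * E (c \<cdot>\<^sub>m M)) / of_nat dS) \<cdot>\<^sub>m 1\<^sub>m dS =
       c \<cdot>\<^sub>m (adj V * E M * V + (mtrace (P * E M) / of_nat dS) \<cdot>\<^sub>m 1\<^sub>m dS)"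
      unfolding EcM t sand_smult[OF aV Ec[OF M] V]
      using sc[OF Ec[OF M]]
      by (intro eq_matI) (auto simp: algebra_simps)
  }
  {
    have "mtrace (adj V * E M * V + (mtrace (P * E M) / of_nat dS) \<cdot>\<^sub>m 1\<^sub>m dS)
       = mtrace (adj V * E M * V) + (mtrace (P * E M) / of_nat dS) * of_nat dS"
      using sc[OF Ec[OF M]] by (simp add: mtrace_add[of _ dS] mtrace_smult[of _ dS] mtrace_one)
    also have "\<dots> = mtrace (E M)"
      using dS by (simp add: trS[OF Ec[OF M]] trP[OF Ec[OF M]])
    also have "\<dots> = mtrace M" using E M unfolding channel_def by auto
    finally show "mtrace (adj V * E M * V + (mtrace (P * E M) / of_nat dS) \<cdot>\<^sub>m 1\<^sub>m dS) = mtrace M" .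
  }
next
  define P where "P = 1\<^sub>m dB - V * adj V"
  have aV: "adj V \<in> carrier_mat dS dB" using V by simp
  have Pi: "V * adj V \<in> carrier_mat dB dB" using mult_carrier_mat[OF V aV] .
  have Pc: "P \<in> carrier_mat dB dB" unfolding P_def using Pi by (simp add: minus_carrier_mat)
  have Ph: "adj P = P" and PP: "P * P = P" unfolding P_def using proj_facts[OF V VV] by auto
  have Ec: "E M \<in> carrier_mat dB dB" if "M \<in> carrier_mat dA dA" for M
    using E that unfolding channel_def by auto
  fix k and M :: "complex mat" assume M: "psd (k * dA) M"
  have Y: "psd (k*dB) (ampl k dA dB E M)" using E M unfolding channel_def by auto
  show "psd (k * dS) (ampl k dA dS (\<lambda>M. adj V * E M * V + (mtrace (P * E M) / of_nat dS) \<cdot>\<^sub>m 1\<^sub>m dS) M)"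
  proof (rule kraus_psd[OF Y, of "insert None (Some ` ({..<dB} \<times> {..<dS}))" "kr V P dB dS"])
    fix a b r s assume ab: "a < k" "b < k" and rs: "r < dS" "s < dS"
    have EB: "E (blk dA M a b) \<in> carrier_mat dB dB" by (rule Ec) simp
    have "ampl k dA dS (\<lambda>M. adj V * E M * V + (mtrace (P * E M) / of_nat dS) \<cdot>\<^sub>m 1\<^sub>m dS) M $$ (a * dS + r, b * dS + s) =
        (adj V * E (blk dA M a b) * V + (mtrace (P * E (blk dA M a b)) / of_nat dS) \<cdot>\<^sub>m 1\<^sub>m dS) $$ (r,s)"
      using ab rs by (simp add: ampl_index)
    also have "\<dots> = (\<Sum>i\<in>insert None (Some ` ({..<dB} \<times> {..<dS})).
       \<Sum>p<dB. \<Sum>q<dB. cnj (kr V P dB dS i $$ (p,r)) * E (blk dA M a b) $$ (p,q) * kr V P dB dS i $$ (q,s))"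
      by (rule fwd_entry[OF EB V Pc Ph PP dS rs])
    also have "\<dots> = (\<Sum>i\<in>insert None (Some ` ({..<dB} \<times> {..<dS})).
       \<Sum>p<dB. \<Sum>q<dB. cnj (kr V P dB dS i $$ (p,r)) * ampl k dA dB E M $$ (a * dB + p, b * dB + q) * kr V P dB dS i $$ (q,s))"
      using ab by (auto intro!: sum.cong simp: ampl_index)
    finally show "ampl k dA dS (\<lambda>M. adj V * E M * V + (mtrace (P * E M) / of_nat dS) \<cdot>\<^sub>m 1\<^sub>m dS) M $$ (a * dS + r, b * dS + s) =
       (\<Sum>i\<in>insert None (Some ` ({..<dB} \<times> {..<dS})).
       \<Sum>p<dB. \<Sum>q<dB. cnj (kr V P dB dS i $$ (p,r)) * ampl k dA dB E M $$ (a * dB + p, b * dB + q) * kr V P dB dS i $$ (q,s))" .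
  qed (use kr_carrier[OF V] in auto)
qed


lemma assoc_dim:
  assumes h1: "dim_col A = dim_row B" and h2: "dim_col B = dim_row C"
  shows "A * B * C = A * (B * C)"
proof -
  have a: "A \<in> carrier_mat (dim_row A) (dim_col A)" unfolding carrier_mat_def by blast
  have b: "B \<in> carrier_mat (dim_col A) (dim_col B)" unfolding carrier_mat_def using h1 by simp
  have c: "C \<in> carrier_mat (dim_col B) (dim_col C)" unfolding carrier_mat_def using h2 by simp
  show ?thesis by (rule assoc_mult_mat[OF a b c])
qed

lemma cov_facts:
  fixes U V :: "complex mat"
  assumes V: "V \<in> carrier_mat dB dS" and VV: "adj V * V = 1\<^sub>m dS"
    and U: "U \<in> carrier_mat dB dB" and UU1: "adj U * U = 1\<^sub>m dB" and UU2: "U * adj U = 1\<^sub>m dB"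
    and c1: "U * (V * adj V) = V * adj V * U"
  shows "adj V * U * V * adj V = adj V * U"
    "V * (adj V * adj U * V) = adj U * V"
    "V * (adj V * U * V) = U * V"
    "adj V * adj U * V * adj V = adj V * adj U"
    "adj (adj V * U * V) = adj V * adj U * V"
    "(adj V * U * V) * (adj V * adj U * V) = 1\<^sub>m dS"
proof -
  have aV: "adj V \<in> carrier_mat dS dB" using V by simp
  have aU: "adj U \<in> carrier_mat dB dB" using U by simp
  have d: "dim_row V = dB" "dim_col V = dS" "dim_row U = dB" "dim_col U = dB" using V U by auto
  have Pi: "V * adj V \<in> carrier_mat dB dB" using mult_carrier_mat[OF V aV] .
  have aPi: "adj (V * adj V) = V * adj V" using adj_mult[OF V aV] by (simp del: assoc_mult_mat add: assoc_dim d)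
  have c2: "adj U * (V * adj V) = V * adj V * adj U"
  proof -
    have "adj (U * (V * adj V)) = adj (V * adj V * U)" using c1 by (simp del: assoc_mult_mat add: assoc_dim d)
    moreover have "adj (U * (V * adj V)) = V * adj V * adj U" using adj_mult[OF U Pi] aPi by (simp del: assoc_mult_mat add: assoc_dim d)
    moreover have "adj (V * adj V * U) = adj U * (V * adj V)" using adj_mult[OF Pi U] aPi by (simp del: assoc_mult_mat add: assoc_dim d)
    ultimately show ?thesis by (simp del: assoc_mult_mat add: assoc_dim d)
  qed
  have "adj V * U * V * adj V = adj V * (U * (V * adj V))" using V U aV by (simp del: assoc_mult_mat add: assoc_dim d)
  also have "\<dots> = adj V * (V * adj V * U)" using c1 by (simp del: assoc_mult_mat add: assoc_dim d)
  also have "\<dots> = (adj V * V) * adj V * U" using V U aV by (simp del: assoc_mult_mat add: assoc_dim d)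
  also have "\<dots> = adj V * U" using VV d by (simp del: assoc_mult_mat add: assoc_dim d)
  finally show e1: "adj V * U * V * adj V = adj V * U" .
  have "V * (adj V * adj U * V) = (V * adj V * adj U) * V" using V aU aV by (simp del: assoc_mult_mat add: assoc_dim d)
  also have "\<dots> = adj U * (V * adj V) * V" using c2 by (simp del: assoc_mult_mat add: assoc_dim d)
  also have "\<dots> = adj U * V * (adj V * V)" using V aU aV by (simp del: assoc_mult_mat add: assoc_dim d)
  also have "\<dots> = adj U * V" using VV d V aU by (simp del: assoc_mult_mat add: assoc_dim d)
  finally show "V * (adj V * adj U * V) = adj U * V" .
  have "V * (adj V * U * V) = (V * adj V * U) * V" using V U aV by (simp del: assoc_mult_mat add: assoc_dim d)
  also have "\<dots> = U * (V * adj V) * V" using c1 by (simp del: assoc_mult_mat add: assoc_dim d)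
  also have "\<dots> = U * V * (adj V * V)" using V U aV by (simp del: assoc_mult_mat add: assoc_dim d)
  also have "\<dots> = U * V" using VV d V U by (simp del: assoc_mult_mat add: assoc_dim d)
  finally show "V * (adj V * U * V) = U * V" .
  have "adj V * adj U * V * adj V = adj V * (adj U * (V * adj V))" using V aU aV by (simp del: assoc_mult_mat add: assoc_dim d)
  also have "\<dots> = adj V * (V * adj V * adj U)" using c2 by (simp del: assoc_mult_mat add: assoc_dim d)
  also have "\<dots> = (adj V * V) * adj V * adj U" using V aU aV by (simp del: assoc_mult_mat add: assoc_dim d)
  also have "\<dots> = adj V * adj U" using VV d by (simp del: assoc_mult_mat add: assoc_dim d)
  finally show "adj V * adj U * V * adj V = adj V * adj U" .
  have "adj (adj V * U * V) = adj V * (adj U * V)"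
    using adj_mult[OF mult_carrier_mat[OF aV U] V] adj_mult[OF aV U] by (simp only: adj_adj)
  then show "adj (adj V * U * V) = adj V * adj U * V" by (simp only: assoc_mult_mat[OF aV aU V])
  have "(adj V * U * V) * (adj V * adj U * V) = (adj V * U * V * adj V) * adj U * V"
    using V U aU aV by (simp del: assoc_mult_mat add: assoc_dim d)
  also have "\<dots> = adj V * (U * adj U) * V" unfolding e1 using V U aU aV by (simp del: assoc_mult_mat add: assoc_dim d)
  also have "\<dots> = 1\<^sub>m dS" using UU2 VV d by (simp del: assoc_mult_mat add: assoc_dim d)
  finally show "(adj V * U * V) * (adj V * adj U * V) = 1\<^sub>m dS" .
qed


lemma back_cov_step:
  fixes U V X :: "complex mat"
  assumes V: "V \<in> carrier_mat dB dS" and VV: "adj V * V = 1\<^sub>m dS"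
    and U: "U \<in> carrier_mat dB dB" and UU1: "adj U * U = 1\<^sub>m dB" and UU2: "U * adj U = 1\<^sub>m dB"
    and c1: "U * (V * adj V) = V * adj V * U" and X: "X \<in> carrier_mat dS dS"
  shows "V * ((adj V * U * V) * X * adj (adj V * U * V)) * adj V = U * (V * X * adj V) * adj U"
proof -
  note cf = cov_facts[OF V VV U UU1 UU2 c1]
  have d: "dim_row V = dB" "dim_col V = dS" "dim_row U = dB" "dim_col U = dB" "dim_row X = dS" "dim_col X = dS"
    using V U X by auto
  have "V * ((adj V * U * V) * X * adj (adj V * U * V)) * adj V
      = V * ((adj V * U * V) * X * (adj V * adj U * V)) * adj V" unfolding cf(5) ..
  also have "\<dots> = (V * (adj V * U * V)) * X * (adj V * adj U * V * adj V)"
    by (simp del: assoc_mult_mat add: assoc_dim d)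
  also have "\<dots> = (U * V) * X * (adj V * adj U)" unfolding cf(3) cf(4) ..
  also have "\<dots> = U * (V * X * adj V) * adj U"
    by (simp del: assoc_mult_mat add: assoc_dim d)
  finally show ?thesis .
qed

lemma fwd_cov_step:
  fixes U V X :: "complex mat"
  assumes V: "V \<in> carrier_mat dB dS" and VV: "adj V * V = 1\<^sub>m dS"
    and U: "U \<in> carrier_mat dB dB" and UU1: "adj U * U = 1\<^sub>m dB" and UU2: "U * adj U = 1\<^sub>m dB"
    and c1: "U * (V * adj V) = V * adj V * U" and X: "X \<in> carrier_mat dB dB"
  shows "adj V * (U * X * adj U) * V + (mtrace ((1\<^sub>m dB - V * adj V) * (U * X * adj U)) / of_nat dS) \<cdot>\<^sub>m 1\<^sub>m dS
     = (adj V * U * V) * (adj V * X * V + (mtrace ((1\<^sub>m dB - V * adj V) * X) / of_nat dS) \<cdot>\<^sub>m 1\<^sub>m dS) * adj (adj V * U * V)"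
proof -
  note cf = cov_facts[OF V VV U UU1 UU2 c1]
  have aV: "adj V \<in> carrier_mat dS dB" using V by simp
  have aU: "adj U \<in> carrier_mat dB dB" using U by simp
  have d: "dim_row V = dB" "dim_col V = dS" "dim_row U = dB" "dim_col U = dB" "dim_row X = dB" "dim_col X = dB"
    using V U X by auto
  have Pi: "V * adj V \<in> carrier_mat dB dB" using mult_carrier_mat[OF V aV] .
  have UX: "U * X * adj U \<in> carrier_mat dB dB" using mult_carrier_mat[OF mult_carrier_mat[OF U X] aU] .
  have W: "adj V * U * V \<in> carrier_mat dS dS" using mult_carrier_mat[OF mult_carrier_mat[OF aV U] V] .
  have aW: "adj V * adj U * V \<in> carrier_mat dS dS" using mult_carrier_mat[OF mult_carrier_mat[OF aV aU] V] .
  have A0: "adj V * X * V \<in> carrier_mat dS dS" using mult_carrier_mat[OF mult_carrier_mat[OF aV X] V] .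
  have trP: "mtrace ((1\<^sub>m dB - V * adj V) * Y) = mtrace Y - mtrace (V * adj V * Y)" if Y: "Y \<in> carrier_mat dB dB" for Y
  proof -
    have "(1\<^sub>m dB - V * adj V) * Y = 1\<^sub>m dB * Y - V * adj V * Y"
      by (rule minus_mult_distrib_mat) (use Pi Y in auto)
    then show ?thesis using Y Pi by (simp del: assoc_mult_mat add: mtrace_minus[of _ dB])
  qed
  have t1: "mtrace (U * X * adj U) = mtrace X"
  proof -
    have "mtrace (U * X * adj U) = mtrace (adj U * (U * X))"
      by (rule mtrace_comm[of _ dB dB]) (use U X aU in auto)
    also have "adj U * (U * X) = (adj U * U) * X"
      by (rule assoc_mult_mat[symmetric]) (use U X aU in auto)
    also have "\<dots> = X" using UU1 X by simp
    finally show ?thesis .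
  qed
  have t2: "mtrace (V * adj V * (U * X * adj U)) = mtrace (V * adj V * X)"
  proof -
    have "V * adj V * (U * X * adj U) = (V * adj V * U) * X * adj U"
      by (simp del: assoc_mult_mat add: assoc_dim d)
    also have "\<dots> = (U * (V * adj V)) * X * adj U" unfolding c1 ..
    finally have e: "V * adj V * (U * X * adj U) = (U * (V * adj V) * X) * adj U" .
    have "mtrace ((U * (V * adj V) * X) * adj U) = mtrace (adj U * (U * (V * adj V) * X))"
      by (rule mtrace_comm[of _ dB dB]) (use U X aU Pi in auto)
    also have "adj U * (U * (V * adj V) * X) = (adj U * U) * (V * adj V) * X"
      by (simp del: assoc_mult_mat add: assoc_dim d)
    also have "\<dots> = V * adj V * X" unfolding UU1 left_mult_one_mat[OF Pi] ..
    finally show ?thesis unfolding e .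
  qed
  have tr: "mtrace ((1\<^sub>m dB - V * adj V) * (U * X * adj U)) = mtrace ((1\<^sub>m dB - V * adj V) * X)"
    unfolding trP[OF UX] trP[OF X] t1 t2 ..
  define c where "c = mtrace ((1\<^sub>m dB - V * adj V) * X) / of_nat dS"
  have "(adj V * U * V) * (adj V * X * V + c \<cdot>\<^sub>m 1\<^sub>m dS) * adj (adj V * U * V)
     = (adj V * U * V) * (adj V * X * V + c \<cdot>\<^sub>m 1\<^sub>m dS) * (adj V * adj U * V)" unfolding cf(5) ..
  also have "\<dots> = (adj V * U * V) * (adj V * X * V) * (adj V * adj U * V)
      + (adj V * U * V) * (c \<cdot>\<^sub>m 1\<^sub>m dS) * (adj V * adj U * V)"
    by (rule sand_add[OF W A0 _ aW]) simp
  also have "(adj V * U * V) * (c \<cdot>\<^sub>m 1\<^sub>m dS) * (adj V * adj U * V) = c \<cdot>\<^sub>m ((adj V * U * V) * 1\<^sub>m dS * (adj V * adj U * V))"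
    by (rule sand_smult[OF W _ aW]) simp
  also have "(adj V * U * V) * 1\<^sub>m dS * (adj V * adj U * V) = 1\<^sub>m dS"
    unfolding right_mult_one_mat[OF W] by (rule cf(6))
  also have "(adj V * U * V) * (adj V * X * V) * (adj V * adj U * V)
      = (adj V * U * V * adj V) * X * (V * (adj V * adj U * V))"
    by (simp del: assoc_mult_mat add: assoc_dim d)
  also have "\<dots> = adj V * U * X * (adj U * V)" unfolding cf(1) cf(2) ..
  also have "\<dots> = adj V * (U * X * adj U) * V"
    by (simp del: assoc_mult_mat add: assoc_dim d)
  finally show ?thesis unfolding tr c_def by simp
qed


theorem lemma6:
  fixes G :: "('g, 'b) monoid_scheme" and T :: "'g topology"
    and dA dB dS :: nat
    and UA UB :: "'g \<Rightarrow> complex mat"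
    and \<rho> \<sigma> V :: "complex mat"
  assumes G: "compact_group G T"
    and repA: "cont_unitary_rep G T dA UA"
    and repB: "cont_unitary_rep G T dB UB"
    and rho: "is_state dA \<rho>"
    and sigma: "is_state dB \<sigma>"
    and V_iso: "V \<in> carrier_mat dB dS" "adj V * V = 1\<^sub>m dS"
    and decomp: "\<forall>g \<in> carrier G. UB g * (V * adj V) = (V * adj V) * UB g"
    and supp: "(V * adj V) * \<sigma> * (V * adj V) = \<sigma>"
  shows "(\<exists>E. cov_channel G dA UA dB UB E \<and> E \<rho> = \<sigma>) \<longleftrightarrow>
         (\<exists>E. cov_channel G dA UA dS (\<lambda>g. adj V * UB g * V) E \<and> E \<rho> = adj V * \<sigma> * V)"
proof -
  have V: "V \<in> carrier_mat dB dS" and VV: "adj V * V = 1\<^sub>m dS" using V_iso by auto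
  have aV: "adj V \<in> carrier_mat dS dB" using V by simp
  have Pi: "V * adj V \<in> carrier_mat dB dB" using mult_carrier_mat[OF V aV] .
  have sc: "\<sigma> \<in> carrier_mat dB dB" and st: "mtrace \<sigma> = 1"
    using sigma unfolding is_state_def psd_def by auto
  have dm: "dim_row V = dB" "dim_col V = dS" "dim_row \<sigma> = dB" "dim_col \<sigma> = dB"
    using V sc by auto
  have rc: "\<rho> \<in> carrier_mat dA dA"
    using rho unfolding is_state_def psd_def by auto
  have Uf: "UB g \<in> carrier_mat dB dB" "adj (UB g) * UB g = 1\<^sub>m dB" "UB g * adj (UB g) = 1\<^sub>m dB"
    if "g \<in> carrier G" for g
    using repB that unfolding cont_unitary_rep_def unitary_mat_def by auto
  have c1: "UB g * (V * adj V) = V * adj V * UB g" if "g \<in> carrier G" for g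
    using decomp that by auto
  show ?thesis
  proof
    assume "\<exists>E. cov_channel G dA UA dB UB E \<and> E \<rho> = \<sigma>"
    then obtain E where Ech: "channel dA dB E" and Ecov: "covariant G dA UA dB UB E" and Er: "E \<rho> = \<sigma>"
      unfolding cov_channel_def by auto
    have dS: "0 < dS"
    proof (rule ccontr)
      assume "\<not> 0 < dS"
      hence d0: "dS = 0" by simp
      have "mtrace \<sigma> = mtrace (V * adj V * \<sigma> * (V * adj V))" using supp by simp
      also have "V * adj V * \<sigma> * (V * adj V) = V * (adj V * \<sigma> * (V * adj V))"
        by (simp del: assoc_mult_mat add: assoc_dim dm)
      also have "mtrace \<dots> = mtrace ((adj V * \<sigma> * (V * adj V)) * V)"
        by (rule mtrace_comm[of _ dB dS]) (use V aV sc Pi in auto)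
      also have "\<dots> = 0" using dm(2) d0 by (simp add: mtrace_def)
      finally show False using st by simp
    qed
    define E' where "E' = (\<lambda>M. adj V * E M * V + (mtrace ((1\<^sub>m dB - V * adj V) * E M) / of_nat dS) \<cdot>\<^sub>m 1\<^sub>m dS)"
    have ch: "channel dA dS E'" unfolding E'_def by (rule fwd_channel[OF Ech V VV dS])
    have Ec: "E M \<in> carrier_mat dB dB" if "M \<in> carrier_mat dA dA" for M
      using Ech that unfolding channel_def by auto
    have cov: "covariant G dA UA dS (\<lambda>g. adj V * UB g * V) E'"
      unfolding covariant_def
    proof (intro ballI)
      fix g and M :: "complex mat" assume g: "g \<in> carrier G" and M: "M \<in> carrier_mat dA dA"
      have EU: "E (UA g * M * adj (UA g)) = UB g * E M * adj (UB g)"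
        using Ecov g M unfolding covariant_def by auto
      show "E' (UA g * M * adj (UA g)) = adj V * UB g * V * E' M * adj (adj V * UB g * V)"
        unfolding E'_def EU
        by (rule fwd_cov_step[OF V VV Uf[OF g] c1[OF g] Ec[OF M]])
    qed
    have Erho: "E' \<rho> = adj V * \<sigma> * V"
    proof -
      have PP: "V * adj V * (V * adj V) = V * adj V" using proj_facts[OF V VV] by simp
      have "V * adj V * \<sigma> = V * adj V * (V * adj V * \<sigma> * (V * adj V))" using supp by simp
      also have "\<dots> = (V * adj V * (V * adj V)) * \<sigma> * (V * adj V)"
        by (simp del: assoc_mult_mat add: assoc_dim dm)
      also have "\<dots> = \<sigma>" unfolding PP supp ..
      finally have ps: "V * adj V * \<sigma> = \<sigma>" .
      have "(1\<^sub>m dB - V * adj V) * \<sigma> = 1\<^sub>m dB * \<sigma> - V * adj V * \<sigma>"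
        by (rule minus_mult_distrib_mat) (use Pi sc in auto)
      also have "\<dots> = 0\<^sub>m dB dB" unfolding ps using sc by (auto intro!: eq_matI)
      finally have "mtrace ((1\<^sub>m dB - V * adj V) * \<sigma>) = 0" by (simp add: mtrace_def)
      moreover have "adj V * \<sigma> * V \<in> carrier_mat dS dS"
        using mult_carrier_mat[OF mult_carrier_mat[OF aV sc] V] .
      ultimately show ?thesis unfolding E'_def Er by (auto intro!: eq_matI)
    qed
    show "\<exists>E. cov_channel G dA UA dS (\<lambda>g. adj V * UB g * V) E \<and> E \<rho> = adj V * \<sigma> * V"
      using ch cov Erho unfolding cov_channel_def by blast
  next
    assume "\<exists>E. cov_channel G dA UA dS (\<lambda>g. adj V * UB g * V) E \<and> E \<rho> = adj V * \<sigma> * V"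
    then obtain E where Ech: "channel dA dS E" and Ecov: "covariant G dA UA dS (\<lambda>g. adj V * UB g * V) E"
      and Er: "E \<rho> = adj V * \<sigma> * V"
      unfolding cov_channel_def by auto
    define E' where "E' = (\<lambda>M. V * E M * adj V)"
    have ch: "channel dA dB E'" unfolding E'_def by (rule back_channel[OF Ech V VV])
    have Ec: "E M \<in> carrier_mat dS dS" if "M \<in> carrier_mat dA dA" for M
      using Ech that unfolding channel_def by auto
    have cov: "covariant G dA UA dB UB E'"
      unfolding covariant_def
    proof (intro ballI)
      fix g and M :: "complex mat" assume g: "g \<in> carrier G" and M: "M \<in> carrier_mat dA dA"
      have EU: "E (UA g * M * adj (UA g)) = (adj V * UB g * V) * E M * adj (adj V * UB g * V)"
        using Ecov g M unfolding covariant_def by auto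
      show "E' (UA g * M * adj (UA g)) = UB g * E' M * adj (UB g)"
        unfolding E'_def EU
        by (rule back_cov_step[OF V VV Uf[OF g] c1[OF g] Ec[OF M]])
    qed
    have Erho: "E' \<rho> = \<sigma>"
    proof -
      have "E' \<rho> = V * (adj V * \<sigma> * V) * adj V" unfolding E'_def Er ..
      also have "\<dots> = V * adj V * \<sigma> * (V * adj V)"
        by (simp del: assoc_mult_mat add: assoc_dim dm)
      also have "\<dots> = \<sigma>" by (rule supp)
      finally show ?thesis .
    qed
    show "\<exists>E. cov_channel G dA UA dB UB E \<and> E \<rho> = \<sigma>"
      using ch cov Erho unfolding cov_channel_def by blast
  qed
qed

end
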